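(* Consider the setting and algorithm described in the context and assume (A1), (A2), (A3). Given a time horizon $K>0$, a node $i_0\in\{1,\dots,N\}$ and a privacy level $\epsilon_{i_0}>0$, the algorithm run for $K$ iterations preserves $\epsilon_{i_0}$-differential privacy for node $i_0$'s objective function if $$\sum_{k=1}^K\sqrt d\Big(\frac1{\alpha u_{e,i_0}}+\frac1{u_{w,i_0}}\Big)\frac{\alpha\delta}{r_{i_0}^k(1-\alpha\bar M)}\le\epsilon_{i_0}.$$
   Context: Problem. Let $\mathcal G=(\mathcal V,\mathcal E)$ be a connected undirected graph with $\mathcal V=\{1,\dots,N\}$. Each node $i$ holds a differentiable $f_i:\mathbb R^d\to\mathbb R$. (A1) Each $\nabla f_i$ is $M_i$-Lipschitz; $\bar M=\max_iM_i$. (A2) $f=\sum_if_i$ satisfies $\inf f>-\infty$. $\tilde f(\mathbf x)=\sum_if_i(x_i)$ for $\mathbf x=(x_1^{\mathsf T},\dots,x_N^{\mathsf T})^{\mathsf T}$. $\mathbf P\in\mathbb R^{N\times N}$ symmetric positive semidefinite with $p_{ij}=0$ if $i\ne j$, $\{i,j\}\notin\mathcal E$; $\mathbf L=\mathbf P\otimes\mathbf I_d$. (A3) $\mathrm{Null}(\mathbf L)=\{\mathbf x:x_1=\dots=x_N\}$. Algorithm. Parameters $\rho,\alpha,\beta>0$, a predetermined sequence $\eta^k\in(0,1)$, decay rates $r_i\in(0,1)$, scales $u_{e,i},u_{w,i}>0$. $\mathbf x^0$ arbitrary, $\mathbf d^0=\mathbf q^0=\mathbf 0$. At each $k$, independent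 noises $w_i^k,e_i^k\in\mathbb R^d$ with independent Laplace coordinates (density $\frac1{2\theta}e^{-|x|/\theta}$) of scales $r_i^ku_{w,i}$ and $r_i^ku_{e,i}$, stacked into $\mathbf w^k,\mathbf e^k$. Updates: $\mathbf y^k=\mathbf x^k+(1-\eta^k)\mathbf d^k+\mathbf w^k$, $\mathbf z^k=\nabla\tilde f(\mathbf x^k)+\eta^k\mathbf q^k+\rho\mathbf L\mathbf y^k+\mathbf e^k$, $\mathbf x^{k+1}=\mathbf x^k+\mathbf w^k-\alpha(\mathbf z^k-\mathbf e^k)+\beta\mathbf L\mathbf z^k$, $\mathbf d^{k+1}=\eta^k\mathbf d^k+\mathbf y^k$, $\mathbf q^{k+1}=\eta^k\mathbf q^k+\rho\mathbf L\mathbf y^k$. The observation available to an eavesdropper is $\mathcal O=\{\mathbf y^k,\mathbf z^k\}_{k}$ (the transmitted quantities). $\delta$-adjacency: for $\delta>0$, two function sets $F^{(1)}=\{f_i^{(1)}\}_{i=1}^N$, $F^{(2)}=\{f_i^{(2)}\}_{i=1}^N$ (each satisfying the assumptions above) are $\delta$-adjacent if there is $i_0$ with $f_i^{(1)}=f_i^{(2)}$ for $i\ne i_0$ and $\sup_{x\in\mathbb R^d}\|\nabla f_{i_0}^{(1)}(x)-\nabla f_{i_0}^{(2)}(x)\|\le\delta$. $\epsilon$-differential privacy (for node $i_0$'s objective): for any $\delta$-adjacent $F^{(1)},F^{(2)}$ (differing at $i_0$) and any observation $\mathcal O$, $\mathbb P(F^{(1)}|\mathcal O)\le e^{\epsilon}\mathbb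 P(F^{(2)}|\mathcal O)$, where $\mathbb P(F^{(h)}|\mathcal O)$ is the probability of inferring $F^{(h)}$ from $\mathcal O$; concretely, with initialization, network and $\{\eta^k\}$ fixed, the observation is determined by the noise sequences, and $\mathbb P(F^{(h)}|\mathcal O)$ is the probability (density) of the noise sequences that produce $\mathcal O$ when the algorithm runs on $F^{(h)}$. *)

theory Defs
  imports "HOL-Analysis.Analysis"
begin

text \<open>Nodes are indexed by a finite type 'n (N = CARD('n)), the local dimension by a
finite type 'd (d = CARD('d)).  A stacked vector is of type real^'d^'n, with block x$i.\<close>

definition connected_undirected_graph :: "('n::finite \<times> 'n) set \<Rightarrow> bool" where
  "connected_undirected_graph Eg \<longleftrightarrow> sym Eg \<and> (\<forall>i j. (i, j) \<in> Eg\<^sup>*)"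

definition graph_compatible_psd :: "('n::finite \<times> 'n) set \<Rightarrow> real^'n^'n \<Rightarrow> bool" where
  "graph_compatible_psd Eg P \<longleftrightarrow>
     (\<forall>i j. P$i$j = P$j$i) \<and>
     (\<forall>v::real^'n. (\<Sum>i\<in>UNIV. \<Sum>j\<in>UNIV. v$i * P$i$j * v$j) \<ge> 0) \<and>
     (\<forall>i j. i \<noteq> j \<and> (i, j) \<notin> Eg \<longrightarrow> P$i$j = 0)"

text \<open>L = P \<otimes> I_d acting on stacked vectors.\<close>
definition Lop :: "real^'n^'n \<Rightarrow> real^'d^'n \<Rightarrow> real^'d^'n" where
  "Lop P x = (\<chi> i. \<Sum>j\<in>UNIV. P$i$j *\<^sub>R x$j)"

definition stack_grad :: "('n::finite \<Rightarrow> real^'d \<Rightarrow> real^'d) \<Rightarrow> real^'d^'n \<Rightarrow> real^'d^'n" where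
  "stack_grad g x = (\<chi> i. g i (x$i))"

text \<open>State (x^k, d^k, q^k) of the algorithm, driven by noises W k = w^k, E k = e^k.\<close>
fun alg_state ::
  "real^'n^'n \<Rightarrow> real \<Rightarrow> real \<Rightarrow> real \<Rightarrow> (nat \<Rightarrow> real) \<Rightarrow> ('n::finite \<Rightarrow> real^'d \<Rightarrow> real^'d)
   \<Rightarrow> real^'d^'n \<Rightarrow> (nat \<Rightarrow> real^'d^'n) \<Rightarrow> (nat \<Rightarrow> real^'d^'n) \<Rightarrow> nat
   \<Rightarrow> (real^'d^'n) \<times> (real^'d^'n) \<times> (real^'d^'n)" where
  "alg_state P \<rho> \<alpha> \<beta> \<eta> g x0 W E 0 = (x0, 0, 0)"
| "alg_state P \<rho> \<alpha> \<beta> \<eta> g x0 W E (Suc k) =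
     (let (x, d, q) = alg_state P \<rho> \<alpha> \<beta> \<eta> g x0 W E k;
          y = x + (1 - \<eta> k) *\<^sub>R d + W k;
          z = stack_grad g x + \<eta> k *\<^sub>R q + \<rho> *\<^sub>R Lop P y + E k
      in (x + W k - \<alpha> *\<^sub>R (z - E k) + \<beta> *\<^sub>R Lop P z,
          \<eta> k *\<^sub>R d + y,
          \<eta> k *\<^sub>R q + \<rho> *\<^sub>R Lop P y))"

text \<open>Transmitted quantities (y^k, z^k) at iteration k.\<close>
definition alg_obs ::
  "real^'n^'n \<Rightarrow> real \<Rightarrow> real \<Rightarrow> real \<Rightarrow> (nat \<Rightarrow> real) \<Rightarrow> ('n::finite \<Rightarrow> real^'d \<Rightarrow> real^'d)
   \<Rightarrow> real^'d^'n \<Rightarrow> (nat \<Rightarrow> real^'d^'n) \<Rightarrow> (nat \<Rightarrow> real^'d^'n) \<Rightarrow> nat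
   \<Rightarrow> (real^'d^'n) \<times> (real^'d^'n)" where
  "alg_obs P \<rho> \<alpha> \<beta> \<eta> g x0 W E k =
     (let (x, d, q) = alg_state P \<rho> \<alpha> \<beta> \<eta> g x0 W E k;
          y = x + (1 - \<eta> k) *\<^sub>R d + W k;
          z = stack_grad g x + \<eta> k *\<^sub>R q + \<rho> *\<^sub>R Lop P y + E k
      in (y, z))"

definition laplace_density :: "real \<Rightarrow> real \<Rightarrow> real" where
  "laplace_density \<theta> t = exp (- \<bar>t\<bar> / \<theta>) / (2 * \<theta>)"

definition noise_density ::
  "('n::finite \<Rightarrow> real) \<Rightarrow> ('n \<Rightarrow> real) \<Rightarrow> ('n \<Rightarrow> real) \<Rightarrow> nat
   \<Rightarrow> (nat \<Rightarrow> real^'d::finite^'n) \<Rightarrow> (nat \<Rightarrow> real^'d^'n) \<Rightarrow> real" where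
  "noise_density r uw ue K W E =
     (\<Prod>k<K. \<Prod>i\<in>UNIV. \<Prod>j\<in>UNIV.
        laplace_density (r i ^ k * uw i) (W k $ i $ j) *
        laplace_density (r i ^ k * ue i) (E k $ i $ j))"

end

theory Submission
  imports Defs
begin


lemma gderiv_unique:
  assumes "GDERIV f x :> D1" "GDERIV f x :> D2"
  shows "D1 = D2"
proof -
  have "(\<lambda>h. inner h D1) = (\<lambda>h. inner h D2)"
    using assms unfolding gderiv_def by (rule has_derivative_unique)
  hence "inner (D1 - D2) D1 = inner (D1 - D2) D2" by metis
  hence "inner (D1 - D2) (D1 - D2) = 0" by (simp add: inner_diff_right)
  thus ?thesis by simp
qed

lemma l1_le_l2:
  fixes v :: "real^'d::finite"
  shows "(\<Sum>j\<in>UNIV. \<bar>v$j\<bar>) \<le> sqrt (real CARD('d)) * norm v"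
proof -
  have "(\<Sum>j\<in>(UNIV::'d set). \<bar>\<bar>v$j\<bar>\<bar> * \<bar>(\<lambda>_. 1::real) j\<bar>) \<le> L2_set (\<lambda>j. \<bar>v$j\<bar>) UNIV * L2_set (\<lambda>_. 1::real) (UNIV::'d set)"
    by (rule L2_set_mult_ineq)
  thus ?thesis by (simp add: norm_vec_def L2_set_constant mult.commute)
qed

lemma laplace_ratio:
  assumes "\<theta> > 0"
  shows "laplace_density \<theta> a \<le> exp (\<bar>a - b\<bar> / \<theta>) * laplace_density \<theta> b"
proof -
  have "- \<bar>a\<bar> / \<theta> \<le> \<bar>a - b\<bar> / \<theta> + - \<bar>b\<bar> / \<theta>"
    using assms by (simp add: divide_simps)
  hence h: "exp (- \<bar>a\<bar> / \<theta>) \<le> exp (\<bar>a - b\<bar> / \<theta>) * exp (- \<bar>b\<bar> / \<theta>)"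
    by (simp add: exp_add[symmetric])
  have "exp (- \<bar>a\<bar> / \<theta>) / (2 * \<theta>) \<le> (exp (\<bar>a - b\<bar> / \<theta>) * exp (- \<bar>b\<bar> / \<theta>)) / (2 * \<theta>)"
    using divide_right_mono[OF h, of "2 * \<theta>"] assms by simp
  thus ?thesis unfolding laplace_density_def by simp
qed

lemma prod_exp_le:
  fixes f g c :: "'a \<Rightarrow> real"
  assumes "finite A" "\<And>i. i \<in> A \<Longrightarrow> 0 \<le> f i \<and> f i \<le> exp (c i) * g i"
  shows "prod f A \<le> exp (sum c A) * prod g A"
proof -
  have "prod f A \<le> prod (\<lambda>i. exp (c i) * g i) A" by (rule prod_mono) (use assms in auto)
  also have "\<dots> = exp (sum c A) * prod g A" using assms(1) by (simp add: prod.distrib exp_sum)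
  finally show ?thesis .
qed

lemma state_Suc:
  "alg_state P \<rho> \<alpha> \<beta> \<eta> g x0 W E (Suc k) =
     (let s = alg_state P \<rho> \<alpha> \<beta> \<eta> g x0 W E k;
          y = fst s + (1 - \<eta> k) *\<^sub>R fst (snd s) + W k;
          z = stack_grad g (fst s) + \<eta> k *\<^sub>R snd (snd s) + \<rho> *\<^sub>R Lop P y + E k
      in (fst s + W k - \<alpha> *\<^sub>R (z - E k) + \<beta> *\<^sub>R Lop P z,
          \<eta> k *\<^sub>R fst (snd s) + y,
          \<eta> k *\<^sub>R snd (snd s) + \<rho> *\<^sub>R Lop P y))"
  by (simp add: Let_def case_prod_beta)

lemma obs_eq:
  "alg_obs P \<rho> \<alpha> \<beta> \<eta> g x0 W E k =
     (let s = alg_state P \<rho> \<alpha> \<beta> \<eta> g x0 W E k;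
          y = fst s + (1 - \<eta> k) *\<^sub>R fst (snd s) + W k;
          z = stack_grad g (fst s) + \<eta> k *\<^sub>R snd (snd s) + \<rho> *\<^sub>R Lop P y + E k
      in (y, z))"
  by (simp add: alg_obs_def Let_def case_prod_beta)

lemma grp1: "x1 + u + w1 = x2 + u + (w2::'a::ab_group_add) \<Longrightarrow> w1 - w2 = x2 - x1"
  by (simp add: algebra_simps)

lemma grp2: "s1 + a + l + e1 = s2 + a + l + (e2::'a::ab_group_add) \<Longrightarrow> e1 - e2 = s2 - s1"
  by (metis add.assoc add.commute add_diff_cancel_left' diff_diff_eq grp1)

lemma grp3:
  fixes x1 :: "'a::real_vector"
  shows "x1 + w1 = x2 + w2 \<Longrightarrow> (x1 + w1 - a *\<^sub>R (z - e1) + c) - (x2 + w2 - a *\<^sub>R (z - e2) + c) = a *\<^sub>R (e1 - e2)"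
  by (simp add: algebra_simps)

theorem theorem3:
  fixes Eg :: "('n::finite \<times> 'n) set"
    and P :: "real^'n^'n"
    and f1 f2 :: "'n \<Rightarrow> real^'d::finite \<Rightarrow> real"
    and g1 g2 :: "'n \<Rightarrow> real^'d \<Rightarrow> real^'d"
    and M :: "'n \<Rightarrow> real"
    and \<rho> \<alpha> \<beta> \<delta> \<epsilon> :: real
    and \<eta> :: "nat \<Rightarrow> real"
    and r ue uw :: "'n \<Rightarrow> real"
    and x0 :: "real^'d^'n"
    and K :: nat
    and i0 :: 'n
  assumes graph: "connected_undirected_graph Eg"
    and P: "graph_compatible_psd Eg P"
    and A3: "{x::real^'d^'n. Lop P x = 0} = {x. \<forall>i j. x$i = x$j}"
    and params: "\<rho> > 0" "\<alpha> > 0" "\<beta> > 0"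
    and eta: "\<And>k. 0 < \<eta> k \<and> \<eta> k < 1"
    and r: "\<And>i. 0 < r i \<and> r i < 1"
    and u: "\<And>i. ue i > 0" "\<And>i. uw i > 0"
    and grad1: "\<And>i x. GDERIV (f1 i) x :> g1 i x"
    and grad2: "\<And>i x. GDERIV (f2 i) x :> g2 i x"
    and A1_1: "\<And>i x y. norm (g1 i x - g1 i y) \<le> M i * norm (x - y)"
    and A1_2: "\<And>i x y. norm (g2 i x - g2 i y) \<le> M i * norm (x - y)"
    and A2_1: "bdd_below (range (\<lambda>x. \<Sum>i\<in>UNIV. f1 i x))"
    and A2_2: "bdd_below (range (\<lambda>x. \<Sum>i\<in>UNIV. f2 i x))"
    and delta: "\<delta> > 0"
    and adj_same: "\<And>i. i \<noteq> i0 \<Longrightarrow> f1 i = f2 i"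
    and adj_close: "\<And>x. norm (g1 i0 x - g2 i0 x) \<le> \<delta>"
    and step: "\<alpha> * Max (range M) < 1"
    and K: "K > 0"
    and eps: "\<epsilon> > 0"
    and budget: "(\<Sum>k=1..K. sqrt (real CARD('d)) * (1 / (\<alpha> * ue i0) + 1 / uw i0)
                    * (\<alpha> * \<delta> / (r i0 ^ k * (1 - \<alpha> * Max (range M))))) \<le> \<epsilon>"
  shows "\<forall>W1 E1 W2 E2.
           (\<forall>k<K. alg_obs P \<rho> \<alpha> \<beta> \<eta> g1 x0 W1 E1 k = alg_obs P \<rho> \<alpha> \<beta> \<eta> g2 x0 W2 E2 k)
           \<longrightarrow> noise_density r uw ue K W1 E1 \<le> exp \<epsilon> * noise_density r uw ue K W2 E2"
  proof (intro allI impI)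
  fix W1 E1 W2 E2 :: "nat \<Rightarrow> real^'d^'n"
  assume obs: "\<forall>k<K. alg_obs P \<rho> \<alpha> \<beta> \<eta> g1 x0 W1 E1 k = alg_obs P \<rho> \<alpha> \<beta> \<eta> g2 x0 W2 E2 k"
  define S1 where "S1 = alg_state P \<rho> \<alpha> \<beta> \<eta> g1 x0 W1 E1"
  define S2 where "S2 = alg_state P \<rho> \<alpha> \<beta> \<eta> g2 x0 W2 E2"
  define X1 where "X1 k = fst (S1 k)" for k
  define X2 where "X2 k = fst (S2 k)" for k
  define D1 where "D1 k = fst (snd (S1 k))" for k
  define D2 where "D2 k = fst (snd (S2 k))" for k
  define Q1 where "Q1 k = snd (snd (S1 k))" for k
  define Q2 where "Q2 k = snd (snd (S2 k))" for k
  define Y1 where "Y1 k = X1 k + (1 - \<eta> k) *\<^sub>R D1 k + W1 k" for k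
  define Y2 where "Y2 k = X2 k + (1 - \<eta> k) *\<^sub>R D2 k + W2 k" for k
  define Z1 where "Z1 k = stack_grad g1 (X1 k) + \<eta> k *\<^sub>R Q1 k + \<rho> *\<^sub>R Lop P (Y1 k) + E1 k" for k
  define Z2 where "Z2 k = stack_grad g2 (X2 k) + \<eta> k *\<^sub>R Q2 k + \<rho> *\<^sub>R Lop P (Y2 k) + E2 k" for k
  have X1S: "X1 (Suc k) = X1 k + W1 k - \<alpha> *\<^sub>R (Z1 k - E1 k) + \<beta> *\<^sub>R Lop P (Z1 k)" for k
    by (simp add: X1_def S1_def state_Suc Let_def Z1_def Y1_def D1_def Q1_def del: alg_state.simps)
  have X2S: "X2 (Suc k) = X2 k + W2 k - \<alpha> *\<^sub>R (Z2 k - E2 k) + \<beta> *\<^sub>R Lop P (Z2 k)" for k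
    by (simp add: X2_def S2_def state_Suc Let_def Z2_def Y2_def D2_def Q2_def del: alg_state.simps)
  have D1S: "D1 (Suc k) = \<eta> k *\<^sub>R D1 k + Y1 k" for k
    by (simp add: X1_def S1_def state_Suc Let_def Y1_def D1_def del: alg_state.simps)
  have D2S: "D2 (Suc k) = \<eta> k *\<^sub>R D2 k + Y2 k" for k
    by (simp add: X2_def S2_def state_Suc Let_def Y2_def D2_def del: alg_state.simps)
  have Q1S: "Q1 (Suc k) = \<eta> k *\<^sub>R Q1 k + \<rho> *\<^sub>R Lop P (Y1 k)" for k
    by (simp add: X1_def S1_def state_Suc Let_def Y1_def D1_def Q1_def del: alg_state.simps)
  have Q2S: "Q2 (Suc k) = \<eta> k *\<^sub>R Q2 k + \<rho> *\<^sub>R Lop P (Y2 k)" for k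
    by (simp add: X2_def S2_def state_Suc Let_def Y2_def D2_def Q2_def del: alg_state.simps)
  have obsk: "Y1 k = Y2 k \<and> Z1 k = Z2 k" if "k < K" for k
  proof -
    have a: "alg_obs P \<rho> \<alpha> \<beta> \<eta> g1 x0 W1 E1 k = (Y1 k, Z1 k)"
      by (simp add: obs_eq Let_def X1_def D1_def Q1_def Y1_def Z1_def S1_def)
    have b: "alg_obs P \<rho> \<alpha> \<beta> \<eta> g2 x0 W2 E2 k = (Y2 k, Z2 k)"
      by (simp add: obs_eq Let_def X2_def D2_def Q2_def Y2_def Z2_def S2_def)
    show ?thesis using obs[rule_format, OF that] unfolding a b by simp
  qed
  have DQ: "k \<le> K \<Longrightarrow> D1 k = D2 k \<and> Q1 k = Q2 k" for k
  proof (induction k)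
    case 0
    then show ?case by (simp add: D1_def D2_def Q1_def Q2_def S1_def S2_def)
  next
    case (Suc k)
    then have "k < K" "D1 k = D2 k \<and> Q1 k = Q2 k" by auto
    then show ?case using obsk[of k] by (simp add: D1S D2S Q1S Q2S)
  qed
  have hW: "W1 k - W2 k = X2 k - X1 k" if "k < K" for k
  proof -
    have "Y1 k = Y2 k" "D1 k = D2 k" using obsk[OF that] DQ[of k] that by auto
    thus ?thesis unfolding Y1_def Y2_def by (intro grp1) simp
  qed
  have hE: "E1 k - E2 k = stack_grad g2 (X2 k) - stack_grad g1 (X1 k)" if "k < K" for k
  proof -
    have "Y1 k = Y2 k" "Z1 k = Z2 k" "Q1 k = Q2 k" using obsk[OF that] DQ[of k] that by auto
    thus ?thesis unfolding Z1_def Z2_def by (intro grp2) simp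
  qed
  have hX: "X1 (Suc k) - X2 (Suc k) = \<alpha> *\<^sub>R (E1 k - E2 k)" if "k < K" for k
  proof -
    have z: "Z1 k = Z2 k" using obsk[OF that] by auto
    have "X1 k + W1 k = X2 k + W2 k" using hW[OF that]
      by (metis add.commute diff_add_cancel diff_diff_eq2)
    thus ?thesis unfolding X1S X2S z by (rule grp3)
  qed
  have geq: "g1 i = g2 i" if "i \<noteq> i0" for i
  proof
    fix x show "g1 i x = g2 i x"
      using grad1[of i x] grad2[of i x] adj_same[OF that] by (metis gderiv_unique)
  qed
  have Mnn: "M i \<ge> 0" for i
  proof -
    let ?v = "(\<chi> j. 1) :: real^'d"
    have "?v \<noteq> 0" by (metis vec_lambda_beta zero_index zero_neq_one)
    hence pos: "norm ?v > 0" by simp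
    have "0 \<le> M i * norm (?v - 0)" using A1_1[of i ?v 0] norm_ge_zero order_trans by blast
    thus ?thesis using pos by (simp add: zero_le_mult_iff)
  qed
  define Mb where "Mb = Max (range M)"
  have Mle: "M i0 \<le> Mb" unfolding Mb_def by (rule Max_ge) auto
  have Mb0: "Mb \<ge> 0" using Mle Mnn[of i0] by linarith
  have aM: "\<alpha> * Mb < 1" using step Mb_def by simp
  define B where "B = \<alpha> * \<delta> / (1 - \<alpha> * Mb)"
  have B0: "B \<ge> 0" unfolding B_def using params delta aM by simp
  have Beq: "\<alpha> * (Mb * B + \<delta>) = B"
    unfolding B_def using aM by (simp add: field_simps)
  have comp: "(X1 (Suc k) - X2 (Suc k)) $ i = \<alpha> *\<^sub>R (g2 i (X2 k $ i) - g1 i (X1 k $ i))"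
    if "k < K" for k i
    using hX[OF that] hE[OF that] by (simp add: stack_grad_def)
  have XB: "k \<le> K \<Longrightarrow> (\<forall>i. i \<noteq> i0 \<longrightarrow> X1 k $ i = X2 k $ i) \<and> norm (X1 k $ i0 - X2 k $ i0) \<le> B" for k
  proof (induction k)
    case 0
    then show ?case using B0 by (simp add: X1_def X2_def S1_def S2_def)
  next
    case (Suc k)
    then have k: "k < K" and IH: "\<forall>i. i \<noteq> i0 \<longrightarrow> X1 k $ i = X2 k $ i" "norm (X1 k $ i0 - X2 k $ i0) \<le> B"
      by auto
    have "X1 (Suc k) $ i = X2 (Suc k) $ i" if "i \<noteq> i0" for i
    proof -
      have "(X1 (Suc k) - X2 (Suc k)) $ i = 0"
        using comp[OF k, of i] IH(1) that geq[OF that] by simp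
      thus ?thesis by simp
    qed
    moreover have "norm (X1 (Suc k) $ i0 - X2 (Suc k) $ i0) \<le> B"
    proof -
      have "norm (X1 (Suc k) $ i0 - X2 (Suc k) $ i0) = \<alpha> * norm (g1 i0 (X1 k $ i0) - g2 i0 (X2 k $ i0))"
        using comp[OF k, of i0] params by (simp add: norm_minus_commute)
      also have "norm (g1 i0 (X1 k $ i0) - g2 i0 (X2 k $ i0))
          \<le> norm (g1 i0 (X1 k $ i0) - g1 i0 (X2 k $ i0)) + norm (g1 i0 (X2 k $ i0) - g2 i0 (X2 k $ i0))"
        using norm_triangle_ineq[of "g1 i0 (X1 k $ i0) - g1 i0 (X2 k $ i0)" "g1 i0 (X2 k $ i0) - g2 i0 (X2 k $ i0)"]
        by simp
      also have "\<dots> \<le> M i0 * norm (X1 k $ i0 - X2 k $ i0) + \<delta>"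
        using A1_1[of i0] adj_close by (simp add: add_mono)
      also have "\<dots> \<le> Mb * B + \<delta>"
        using IH(2) Mle Mnn[of i0] B0 by (simp add: mult_mono)
      finally show ?thesis using Beq params
        by (metis mult_left_mono order_less_imp_le)
    qed
    ultimately show ?case by simp
  qed
  define c where "c k i j = \<bar>W1 k $ i $ j - W2 k $ i $ j\<bar> / (r i ^ k * uw i)
      + \<bar>E1 k $ i $ j - E2 k $ i $ j\<bar> / (r i ^ k * ue i)" for k i j
  have thw: "r i ^ k * uw i > 0" for i k using r[of i] u(2)[of i] by simp
  have the: "r i ^ k * ue i > 0" for i k using r[of i] u(1)[of i] by simp
  have lap0: "laplace_density \<theta> t \<ge> 0" if "\<theta> > 0" for \<theta> t
    using that unfolding laplace_density_def by simp
  have fac: "laplace_density (r i ^ k * uw i) (W1 k $ i $ j) * laplace_density (r i ^ k * ue i) (E1 k $ i $ j)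
      \<le> exp (c k i j) * (laplace_density (r i ^ k * uw i) (W2 k $ i $ j) * laplace_density (r i ^ k * ue i) (E2 k $ i $ j))"
    for k i j
  proof -
    have "laplace_density (r i ^ k * uw i) (W1 k $ i $ j) * laplace_density (r i ^ k * ue i) (E1 k $ i $ j)
      \<le> (exp (\<bar>W1 k $ i $ j - W2 k $ i $ j\<bar> / (r i ^ k * uw i)) * laplace_density (r i ^ k * uw i) (W2 k $ i $ j))
        * (exp (\<bar>E1 k $ i $ j - E2 k $ i $ j\<bar> / (r i ^ k * ue i)) * laplace_density (r i ^ k * ue i) (E2 k $ i $ j))"
      by (rule mult_mono) (use laplace_ratio thw the lap0 in auto)
    also have "\<dots> = exp (c k i j) * (laplace_density (r i ^ k * uw i) (W2 k $ i $ j) * laplace_density (r i ^ k * ue i) (E2 k $ i $ j))"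
      unfolding c_def by (simp add: exp_add)
    finally show ?thesis .
  qed
  have dens: "noise_density r uw ue K W1 E1 \<le> exp (\<Sum>k<K. \<Sum>i\<in>UNIV. \<Sum>j\<in>UNIV. c k i j) * noise_density r uw ue K W2 E2"
    unfolding noise_density_def
    apply (rule prod_exp_le, simp)
    apply (intro conjI prod_nonneg ballI)
      apply (simp add: lap0 thw the)
    apply (rule prod_exp_le, simp)
    apply (intro conjI prod_nonneg ballI)
     apply (simp add: lap0 thw the)
    apply (rule prod_exp_le, simp)
    apply (intro conjI)
     apply (simp add: lap0 thw the)
    apply (rule fac)
    done
  define sd where "sd = sqrt (real CARD('d))"
  have sd0: "sd \<ge> 0" unfolding sd_def by simp
  define T where "T k = sd * (1 / (\<alpha> * ue i0) + 1 / uw i0) * (B / r i0 ^ k)" for k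
  have hE': "E1 k - E2 k = (1 / \<alpha>) *\<^sub>R (X1 (Suc k) - X2 (Suc k))" if "k < K" for k
    using hX[OF that] params by simp
  have ck: "(\<Sum>i\<in>UNIV. \<Sum>j\<in>UNIV. c k i j) \<le> T k" if k: "k < K" for k
  proof -
    have zero: "c k i j = 0" if "i \<noteq> i0" for i j
    proof -
      have "W1 k $ i $ j - W2 k $ i $ j = (W1 k - W2 k) $ i $ j" by simp
      also have "\<dots> = 0" using hW[OF k] XB[of k] k that by simp
      finally have a: "W1 k $ i $ j - W2 k $ i $ j = 0" .
      have "E1 k $ i $ j - E2 k $ i $ j = (E1 k - E2 k) $ i $ j" by simp
      also have "\<dots> = 0" using hE'[OF k] XB[of "Suc k"] k that by simp
      finally have b: "E1 k $ i $ j - E2 k $ i $ j = 0" .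
      show ?thesis unfolding c_def a b by simp
    qed
    have "(\<Sum>i\<in>UNIV. \<Sum>j\<in>UNIV. c k i j) = (\<Sum>i\<in>UNIV. if i = i0 then (\<Sum>j\<in>UNIV. c k i0 j) else 0)"
      by (rule sum.cong) (auto simp: zero)
    also have "\<dots> = (\<Sum>j\<in>UNIV. c k i0 j)" by simp
    also have "\<dots> = (\<Sum>j\<in>UNIV. \<bar>(W1 k - W2 k) $ i0 $ j\<bar>) / (r i0 ^ k * uw i0)
        + (\<Sum>j\<in>UNIV. \<bar>(E1 k - E2 k) $ i0 $ j\<bar>) / (r i0 ^ k * ue i0)"
      unfolding c_def by (simp add: sum.distrib sum_divide_distrib)
    also have "\<dots> \<le> (sd * B) / (r i0 ^ k * uw i0) + (sd * (B / \<alpha>)) / (r i0 ^ k * ue i0)"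
    proof (rule add_mono)
      have "(\<Sum>j\<in>UNIV. \<bar>(W1 k - W2 k) $ i0 $ j\<bar>) \<le> sd * norm ((W1 k - W2 k) $ i0)"
        unfolding sd_def by (rule l1_le_l2)
      also have "norm ((W1 k - W2 k) $ i0) = norm (X1 k $ i0 - X2 k $ i0)"
        using hW[OF k] by (simp add: norm_minus_commute)
      also have "sd * \<dots> \<le> sd * B" using XB[of k] k sd0 by (simp add: mult_left_mono)
      finally show "(\<Sum>j\<in>UNIV. \<bar>(W1 k - W2 k) $ i0 $ j\<bar>) / (r i0 ^ k * uw i0) \<le> (sd * B) / (r i0 ^ k * uw i0)"
        using thw[of i0 k] by (intro divide_right_mono) auto
    next
      have "(\<Sum>j\<in>UNIV. \<bar>(E1 k - E2 k) $ i0 $ j\<bar>) \<le> sd * norm ((E1 k - E2 k) $ i0)"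
        unfolding sd_def by (rule l1_le_l2)
      also have "norm ((E1 k - E2 k) $ i0) = norm (X1 (Suc k) $ i0 - X2 (Suc k) $ i0) / \<alpha>"
        using hE'[OF k] params by simp
      also have "\<dots> \<le> B / \<alpha>" using XB[of "Suc k"] k params by (simp add: divide_right_mono)
      finally have "(\<Sum>j\<in>UNIV. \<bar>(E1 k - E2 k) $ i0 $ j\<bar>) \<le> sd * (B / \<alpha>)"
        using sd0 by (simp add: mult_left_mono)
      thus "(\<Sum>j\<in>UNIV. \<bar>(E1 k - E2 k) $ i0 $ j\<bar>) / (r i0 ^ k * ue i0) \<le> (sd * (B / \<alpha>)) / (r i0 ^ k * ue i0)"
        using the[of i0 k] by (intro divide_right_mono) auto
    qed
    also have "\<dots> = T k" unfolding T_def using params u(1)[of i0] u(2)[of i0] r[of i0]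
      by (simp add: field_simps)
    finally show ?thesis .
  qed
  define F where "F k = sqrt (real CARD('d)) * (1 / (\<alpha> * ue i0) + 1 / uw i0)
                    * (\<alpha> * \<delta> / (r i0 ^ k * (1 - \<alpha> * Max (range M))))" for k
  have TF: "T k \<le> F (Suc k)" for k
  proof -
    have F: "F (Suc k) = sd * (1 / (\<alpha> * ue i0) + 1 / uw i0) * (B / r i0 ^ Suc k)"
      unfolding F_def sd_def B_def Mb_def by simp
    have "B / r i0 ^ k \<le> B / r i0 ^ Suc k"
      using r[of i0] B0 by (intro divide_left_mono) (auto simp: power_Suc2 mult_le_cancel_left1 intro: power_le_one)
    moreover have "sd * (1 / (\<alpha> * ue i0) + 1 / uw i0) \<ge> 0" using sd0 params u(1)[of i0] u(2)[of i0] by simp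
    ultimately show ?thesis unfolding F T_def by (rule mult_left_mono)
  qed
  have "(\<Sum>k<K. \<Sum>i\<in>UNIV. \<Sum>j\<in>UNIV. c k i j) \<le> (\<Sum>k<K. T k)" by (rule sum_mono) (use ck in auto)
  also have "\<dots> \<le> (\<Sum>k<K. F (Suc k))" by (rule sum_mono) (use TF in auto)
  also have "\<dots> = (\<Sum>k=1..K. F k)" by (simp add: sum.atLeast1_atMost_eq)
  also have "\<dots> \<le> \<epsilon>" using budget unfolding F_def by simp
  finally have "exp (\<Sum>k<K. \<Sum>i\<in>UNIV. \<Sum>j\<in>UNIV. c k i j) \<le> exp \<epsilon>" by simp
  moreover have "noise_density r uw ue K W2 E2 \<ge> 0"
    unfolding noise_density_def by (intro prod_nonneg mult_nonneg_nonneg) (simp_all add: lap0 thw the)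
  ultimately show "noise_density r uw ue K W1 E1 \<le> exp \<epsilon> * noise_density r uw ue K W2 E2"
    using dens by (meson mult_right_mono order_trans)
qed

end
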